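(* Let $\Omega\subset\mathbb C^n$ be a domain and $\eta\ge0$ a measurable function on $\Omega$ such that $\int_\Omega\phi^2\eta\le\int_\Omega|\nabla\phi|^2$ for all $\phi\in C_0^\infty(\Omega)$. Then $$\int_\Omega|\omega|^2\eta\le 4\int_\Omega|\bar\partial\omega|^2+4\int_\Omega|\bar\partial^*\omega|^2$$ for every smooth compactly supported $(0,1)$-form $\omega$ on $\Omega$.
   Context: Here $\mathbb C^n$ is identified with $\mathbb R^{2n}$ and $\nabla$ is the real gradient. For $\omega=\sum_j\omega_j\,d\bar z_j$, $|\omega|^2=\sum_j|\omega_j|^2$, $\bar\partial\omega$ is the $(0,2)$-form given by the Cauchy–Riemann operator, and $\bar\partial^*\omega=-\sum_j\partial\omega_j/\partial z_j$ is the formal adjoint of $\bar\partial$ with respect to the unweighted Euclidean $L^2$ inner product. *)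

theory Defs
  imports "HOL-Analysis.Analysis"
begin

fun Ck_on :: "nat \<Rightarrow> ('a::euclidean_space \<Rightarrow> 'b::real_normed_vector) \<Rightarrow> 'a set \<Rightarrow> bool" where
  "Ck_on 0 f S = continuous_on S f"
| "Ck_on (Suc k) f S = (f differentiable_on S \<and>
      (\<forall>v. Ck_on k (\<lambda>x. frechet_derivative f (at x) v) S))"

definition smooth_on :: "('a::euclidean_space \<Rightarrow> 'b::real_normed_vector) \<Rightarrow> 'a set \<Rightarrow> bool" where
  "smooth_on f S = (\<forall>k. Ck_on k f S)"

definition test_function :: "'a::euclidean_space set \<Rightarrow> ('a \<Rightarrow> 'b::real_normed_vector) \<Rightarrow> bool" where
  "test_function \<Omega> f = (smooth_on f UNIV \<and> compact (closure {x. f x \<noteq> 0})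
      \<and> closure {x. f x \<noteq> 0} \<subseteq> \<Omega>)"

text \<open>Partial derivatives w.r.t. x_j and y_j, where z_j = x_j + i y_j.\<close>
definition dx :: "(complex^'n \<Rightarrow> 'b::real_normed_vector) \<Rightarrow> 'n \<Rightarrow> complex^'n \<Rightarrow> 'b" where
  "dx f j z = frechet_derivative f (at z) (axis j 1)"

definition dy :: "(complex^'n \<Rightarrow> 'b::real_normed_vector) \<Rightarrow> 'n \<Rightarrow> complex^'n \<Rightarrow> 'b" where
  "dy f j z = frechet_derivative f (at z) (axis j \<i>)"

definition dzbar :: "(complex^'n \<Rightarrow> complex) \<Rightarrow> 'n \<Rightarrow> complex^'n \<Rightarrow> complex" where
  "dzbar f j z = (dx f j z + \<i> * dy f j z) / 2"

definition dz :: "(complex^'n \<Rightarrow> complex) \<Rightarrow> 'n \<Rightarrow> complex^'n \<Rightarrow> complex" where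
  "dz f j z = (dx f j z - \<i> * dy f j z) / 2"

definition grad_sq :: "(complex^'n \<Rightarrow> real) \<Rightarrow> complex^'n \<Rightarrow> real" where
  "grad_sq \<phi> z = (\<Sum>j\<in>UNIV. (dx \<phi> j z)\<^sup>2 + (dy \<phi> j z)\<^sup>2)"

text \<open>A (0,1)-form omega = sum_j omega_j d(zbar_j) is given by its coefficient functions.\<close>
definition form_sq :: "('n \<Rightarrow> complex^'n \<Rightarrow> complex) \<Rightarrow> complex^'n \<Rightarrow> real" where
  "form_sq \<omega> z = (\<Sum>j\<in>UNIV. (cmod (\<omega> j z))\<^sup>2)"

text \<open>|dbar omega|^2 = sum_{j<k} |d omega_k/d zbar_j - d omega_j/d zbar_k|^2,
  written as half the sum over all ordered pairs (the summand is symmetric and vanishes on the diagonal).\<close>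
definition dbar_sq :: "('n \<Rightarrow> complex^'n \<Rightarrow> complex) \<Rightarrow> complex^'n \<Rightarrow> real" where
  "dbar_sq \<omega> z = (1/2) * (\<Sum>j\<in>UNIV. \<Sum>k\<in>UNIV.
      (cmod (dzbar (\<omega> k) j z - dzbar (\<omega> j) k z))\<^sup>2)"

text \<open>dbar^* omega = - sum_j d omega_j / d z_j (unweighted formal adjoint).\<close>
definition dbar_star :: "('n \<Rightarrow> complex^'n \<Rightarrow> complex) \<Rightarrow> complex^'n \<Rightarrow> complex" where
  "dbar_star \<omega> z = - (\<Sum>j\<in>UNIV. dz (\<omega> j) j z)"

end

theory Submission
  imports Defs
begin

definition Dv :: "('a::euclidean_space \<Rightarrow> 'b::real_normed_vector) \<Rightarrow> 'a \<Rightarrow> 'a \<Rightarrow> 'b" where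
  "Dv f u x = frechet_derivative f (at x) u"

lemma smooth_Dv: "smooth_on f UNIV \<Longrightarrow> smooth_on (Dv f u) UNIV"
  unfolding smooth_on_def Dv_def
proof
  fix k assume "\<forall>k. Ck_on k f UNIV"
  then have "Ck_on (Suc k) f UNIV" by blast
  then show "Ck_on k (\<lambda>x. frechet_derivative f (at x) u) UNIV" by simp
qed

lemma smooth_cont: "smooth_on f UNIV \<Longrightarrow> continuous_on UNIV f"
  unfolding smooth_on_def by (metis Ck_on.simps(1))

lemma smooth_contD: "smooth_on f UNIV \<Longrightarrow> continuous_on UNIV (Dv f u)"
  by (simp add: smooth_Dv smooth_cont)

lemma smooth_has_derivative: "smooth_on f UNIV \<Longrightarrow> (f has_derivative frechet_derivative f (at x)) (at x)"
proof -
  assume "smooth_on f UNIV"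
  then have "Ck_on (Suc 0) f UNIV" unfolding smooth_on_def by blast
  then have "f differentiable at x" by (simp add: differentiable_on_def)
  then show ?thesis by (rule frechet_derivative_works[THEN iffD1])
qed

lemma Dv_vanish:
  assumes "closed C" "\<And>y. y \<notin> C \<Longrightarrow> f y = 0" "x \<notin> C"
  shows "Dv f u x = 0"
proof -
  have "((\<lambda>y. 0) has_derivative (\<lambda>h. 0)) (at x)" by simp
  then have "(f has_derivative (\<lambda>h. 0)) (at x)"
    by (rule has_derivative_transform_within_open[where s="- C"]) (use assms in auto)
  then show ?thesis unfolding Dv_def using frechet_derivative_at by metis
qed

lemma Ck_on_linear:
  assumes "bounded_linear L"
  shows "Ck_on k f UNIV \<Longrightarrow> Ck_on k (\<lambda>x. L (f x)) UNIV"
proof (induction k arbitrary: f)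
  case 0
  then show ?case using linear_continuous_on[OF assms] continuous_on_compose[of UNIV f L]
    by (simp add: o_def continuous_on_subset)
next
  case (Suc k)
  then have d: "f differentiable_on UNIV" and c: "\<And>v. Ck_on k (\<lambda>x. frechet_derivative f (at x) v) UNIV"
    by auto
  have hd: "(f has_derivative frechet_derivative f (at x)) (at x)" for x
    using d by (simp add: differentiable_on_def frechet_derivative_works[symmetric])
  have eq: "frechet_derivative (\<lambda>x. L (f x)) (at x) v = L (frechet_derivative f (at x) v)" for x v
    using bounded_linear.has_derivative[OF assms hd[of x]] frechet_derivative_at by metis
  have "(\<lambda>x. L (f x)) differentiable_on UNIV"
    using bounded_linear.has_derivative[OF assms hd] by (auto simp: differentiable_on_def differentiable_def)
  moreover have "Ck_on k (\<lambda>x. frechet_derivative (\<lambda>x. L (f x)) (at x) v) UNIV" for v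
    unfolding eq using Suc.IH[OF c] .
  ultimately show ?case by simp
qed

lemma smooth_linear: "bounded_linear L \<Longrightarrow> smooth_on f UNIV \<Longrightarrow> smooth_on (\<lambda>x. L (f x)) UNIV"
  unfolding smooth_on_def using Ck_on_linear by blast

lemma Dv_linear: "bounded_linear L \<Longrightarrow> smooth_on f UNIV \<Longrightarrow> Dv (\<lambda>x. L (f x)) u x = L (Dv f u x)"
  unfolding Dv_def using bounded_linear.has_derivative[OF _ smooth_has_derivative] frechet_derivative_at by metis

lemma line_deriv:
  assumes "smooth_on g UNIV"
  shows "((\<lambda>a. g (y + a *\<^sub>R w)) has_derivative (\<lambda>h. h *\<^sub>R Dv g w (y + a *\<^sub>R w))) (at a within S)"
proof -
  have l: "((\<lambda>a. y + a *\<^sub>R w) has_derivative (\<lambda>h. h *\<^sub>R w)) (at a within S)"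
    by (auto intro!: derivative_eq_intros)
  have g: "(g has_derivative frechet_derivative g (at (y + a *\<^sub>R w))) (at (y + a *\<^sub>R w))"
    using smooth_has_derivative[OF assms] .
  have lin: "linear (frechet_derivative g (at (y + a *\<^sub>R w)))"
    using g has_derivative_linear by blast
  have "((\<lambda>a. g (y + a *\<^sub>R w)) has_derivative (\<lambda>h. frechet_derivative g (at (y + a *\<^sub>R w)) (h *\<^sub>R w))) (at a within S)"
    using has_derivative_compose[OF l g[THEN has_derivative_at_withinI]] by (simp add: o_def)
  then show ?thesis unfolding Dv_def using linear_scale[OF lin] by simp
qed

lemma Delta_mvt:
  fixes g :: "'a::euclidean_space \<Rightarrow> real"
  assumes g: "smooth_on g UNIV" and s: "s > 0"
  shows "\<exists>\<xi> \<eta>. 0 < \<xi> \<and> \<xi> < s \<and> 0 < \<eta> \<and> \<eta> < s \<and>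
     g (x + s *\<^sub>R u + s *\<^sub>R v) - g (x + s *\<^sub>R u) - g (x + s *\<^sub>R v) + g x
       = s * s * Dv (Dv g u) v (x + \<xi> *\<^sub>R u + \<eta> *\<^sub>R v)"
proof -
  define \<phi> where "\<phi> a = g (x + s *\<^sub>R v + a *\<^sub>R u) - g (x + a *\<^sub>R u)" for a
  have "(\<phi> has_derivative (\<lambda>h. h *\<^sub>R (Dv g u (x + s *\<^sub>R v + a *\<^sub>R u) - Dv g u (x + a *\<^sub>R u)))) (at a within {0..s})" for a
    unfolding \<phi>_def scaleR_diff_right
    by (intro has_derivative_diff line_deriv g)
  from mvt_simple[OF s this]
  obtain \<xi> where \<xi>: "\<xi> \<in> {0<..<s}" and e1: "\<phi> s - \<phi> 0 = (s - 0) *\<^sub>R (Dv g u (x + s *\<^sub>R v + \<xi> *\<^sub>R u) - Dv g u (x + \<xi> *\<^sub>R u))"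
    by blast
  define \<psi> where "\<psi> b = Dv g u (x + \<xi> *\<^sub>R u + b *\<^sub>R v)" for b
  have "(\<psi> has_derivative (\<lambda>h. h *\<^sub>R Dv (Dv g u) v (x + \<xi> *\<^sub>R u + b *\<^sub>R v))) (at b within {0..s})" for b
    unfolding \<psi>_def by (intro line_deriv smooth_Dv g)
  from mvt_simple[OF s this]
  obtain \<eta> where \<eta>: "\<eta> \<in> {0<..<s}" and e2: "\<psi> s - \<psi> 0 = (s - 0) *\<^sub>R Dv (Dv g u) v (x + \<xi> *\<^sub>R u + \<eta> *\<^sub>R v)"
    by blast
  have "g (x + s *\<^sub>R u + s *\<^sub>R v) - g (x + s *\<^sub>R u) - g (x + s *\<^sub>R v) + g x = \<phi> s - \<phi> 0"
    unfolding \<phi>_def by (simp add: algebra_simps)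
  also have "\<dots> = s * (\<psi> s - \<psi> 0)"
    using e1 unfolding \<psi>_def by (simp add: algebra_simps)
  also have "\<dots> = s * s * Dv (Dv g u) v (x + \<xi> *\<^sub>R u + \<eta> *\<^sub>R v)"
    using e2 by simp
  finally show ?thesis using \<xi> \<eta> by auto
qed

lemma clairaut_real:
  fixes g :: "'a::euclidean_space \<Rightarrow> real"
  assumes g: "smooth_on g UNIV"
  shows "Dv (Dv g u) v x = Dv (Dv g v) u x"
proof -
  let ?p = "Dv (Dv g u) v" and ?q = "Dv (Dv g v) u"
  have cp: "continuous_on UNIV ?p" and cq: "continuous_on UNIV ?q"
    by (simp_all add: smooth_contD smooth_Dv g)
  have "\<bar>?p x - ?q x\<bar> < 2 * e" if e: "e > 0" for e
  proof -
    obtain d1 where d1: "d1 > 0" "\<And>y. dist y x < d1 \<Longrightarrow> dist (?p y) (?p x) < e"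
      using cp e unfolding continuous_on_iff by (metis UNIV_I)
    obtain d2 where d2: "d2 > 0" "\<And>y. dist y x < d2 \<Longrightarrow> dist (?q y) (?q x) < e"
      using cq e unfolding continuous_on_iff by (metis UNIV_I)
    define d where "d = min d1 d2"
    define s where "s = d / (norm u + norm v + 1)"
    have d: "d > 0" using d1 d2 by (simp add: d_def)
    have nn: "0 < norm u + norm v + 1" by (smt (verit) norm_ge_zero)
    have s: "s > 0" using d nn by (simp add: s_def)
    have near: "dist (x + a *\<^sub>R u + b *\<^sub>R v) x < d" if "0 < a" "a < s" "0 < b" "b < s" for a b
    proof -
      have "dist (x + a *\<^sub>R u + b *\<^sub>R v) x = norm (a *\<^sub>R u + b *\<^sub>R v)" by (simp add: dist_norm)
      also have "\<dots> \<le> a * norm u + b * norm v"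
        using norm_triangle_ineq[of "a *\<^sub>R u" "b *\<^sub>R v"] that by simp
      also have "\<dots> \<le> s * norm u + s * norm v"
        using that by (intro add_mono mult_right_mono) auto
      also have "\<dots> < s * (norm u + norm v + 1)" using s by (simp add: algebra_simps)
      also have "\<dots> = d" unfolding s_def using nn by simp
      finally show ?thesis .
    qed
    obtain \<xi> \<eta> where A: "0 < \<xi>" "\<xi> < s" "0 < \<eta>" "\<eta> < s"
      "g (x + s *\<^sub>R u + s *\<^sub>R v) - g (x + s *\<^sub>R u) - g (x + s *\<^sub>R v) + g x = s * s * ?p (x + \<xi> *\<^sub>R u + \<eta> *\<^sub>R v)"
      using Delta_mvt[OF g s, of x u v] by blast
    obtain \<xi>' \<eta>' where B: "0 < \<xi>'" "\<xi>' < s" "0 < \<eta>'" "\<eta>' < s"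
      "g (x + s *\<^sub>R v + s *\<^sub>R u) - g (x + s *\<^sub>R v) - g (x + s *\<^sub>R u) + g x = s * s * ?q (x + \<xi>' *\<^sub>R v + \<eta>' *\<^sub>R u)"
      using Delta_mvt[OF g s, of x v u] by blast
    have "s * s * ?p (x + \<xi> *\<^sub>R u + \<eta> *\<^sub>R v) = s * s * ?q (x + \<xi>' *\<^sub>R v + \<eta>' *\<^sub>R u)"
      using A(5) B(5) by (simp add: algebra_simps)
    then have eq: "?p (x + \<xi> *\<^sub>R u + \<eta> *\<^sub>R v) = ?q (x + \<xi>' *\<^sub>R v + \<eta>' *\<^sub>R u)"
      using s by simp
    have "dist (?p (x + \<xi> *\<^sub>R u + \<eta> *\<^sub>R v)) (?p x) < e"
      using d1(2) near[OF A(1-4)] d_def by simp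
    moreover have "dist (?q (x + \<xi>' *\<^sub>R v + \<eta>' *\<^sub>R u)) (?q x) < e"
    proof -
      have "dist (x + \<xi>' *\<^sub>R v + \<eta>' *\<^sub>R u) x < d2"
        using near[OF B(3) B(4) B(1) B(2)] d_def by (simp add: add_ac)
      then show ?thesis using d2(2) by blast
    qed
    ultimately show ?thesis using eq unfolding dist_real_def by linarith
  qed
  note * = this
  have "\<bar>?p x - ?q x\<bar> = 0"
  proof (rule ccontr)
    assume "\<bar>?p x - ?q x\<bar> \<noteq> 0"
    then have "\<bar>?p x - ?q x\<bar> > 0" by simp
    from *[OF divide_pos_pos[OF this, of 4]] show False by simp
  qed
  then show ?thesis by simp
qed

lemma line_deriv':
  assumes "\<And>x. F differentiable at x"
  shows "((\<lambda>a. F (y + a *\<^sub>R w)) has_derivative (\<lambda>h. h *\<^sub>R Dv F w (y + a *\<^sub>R w))) (at a within S)"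
proof -
  have l: "((\<lambda>a. y + a *\<^sub>R w) has_derivative (\<lambda>h. h *\<^sub>R w)) (at a within S)"
    by (auto intro!: derivative_eq_intros)
  have g: "(F has_derivative frechet_derivative F (at (y + a *\<^sub>R w))) (at (y + a *\<^sub>R w))"
    using assms frechet_derivative_works by blast
  have lin: "linear (frechet_derivative F (at (y + a *\<^sub>R w)))"
    using g has_derivative_linear by blast
  have "((\<lambda>a. F (y + a *\<^sub>R w)) has_derivative (\<lambda>h. frechet_derivative F (at (y + a *\<^sub>R w)) (h *\<^sub>R w))) (at a within S)"
    using has_derivative_compose[OF l g[THEN has_derivative_at_withinI]] by (simp add: o_def)
  then show ?thesis unfolding Dv_def using linear_scale[OF lin] by simp
qed

lemma shift_integral:
  fixes H :: "'a::euclidean_space \<Rightarrow> real"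
  assumes H: "continuous_on UNIV H" and z: "\<And>y. y \<notin> K \<Longrightarrow> H y = 0"
    and KB: "K \<subseteq> cbox (-c) c" and KwB: "\<And>k. k \<in> K \<Longrightarrow> k - w \<in> cbox (-c) c"
  shows "integral (cbox (-c) c) (\<lambda>y. H (y + w)) = integral (cbox (-c) c) H"
proof -
  have "H integrable_on cbox (-c) c" using H by (auto intro: integrable_continuous continuous_on_subset)
  then have h1: "(H has_integral integral (cbox (-c) c) H) (cbox (-c) c)" by blast
  have h2: "(H has_integral integral (cbox (-c) c) H) UNIV"
    by (rule has_integral_on_superset[OF h1]) (use z KB in auto)
  have z2: "H y = 0" if "y \<notin> cbox (-c + w) (c + w)" for y
  proof (rule z)
    show "y \<notin> K"
    proof
      assume "y \<in> K"
      then have "y - w \<in> cbox (-c) c" by (rule KwB)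
      then have "y \<in> cbox (-c + w) (c + w)"
        by (auto simp: mem_box algebra_simps)
      with that show False by blast
    qed
  qed
  have "((\<lambda>x. if x \<in> cbox (-c + w) (c + w) then H x else 0) has_integral integral (cbox (-c) c) H) UNIV"
    using h2 by (rule has_integral_eq[rotated]) (use z2 in auto)
  then have "(H has_integral integral (cbox (-c) c) H) (cbox (-c + w) (c + w))"
    by (simp add: has_integral_restrict_UNIV)
  then have "((H \<circ> (+) w) has_integral integral (cbox (-c) c) H) (cbox (-c) c)"
    using has_integral_shift_cbox_iff by blast
  then show ?thesis by (simp add: o_def add.commute integral_unique)
qed

lemma Dv_integral_zero:
  fixes F :: "'a::euclidean_space \<Rightarrow> real"
  assumes dF: "\<And>x. F differentiable at x" and cG: "continuous_on UNIV (Dv F u)"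
    and K: "compact K" and z: "\<And>x. x \<notin> K \<Longrightarrow> F x = 0"
  shows "(Dv F u has_integral 0) UNIV"
proof -
  let ?G = "Dv F u"
  define L where "L = (\<lambda>p. fst p - snd p *\<^sub>R u) ` (K \<times> {0..1::real})"
  have "compact L" unfolding L_def
    by (intro compact_continuous_image compact_Times K compact_Icc continuous_intros) 
  then obtain c where c: "L \<subseteq> cbox (-c) c"
    using compact_imp_bounded bounded_subset_cbox_symmetric by metis
  have Lmem: "k - t *\<^sub>R u \<in> cbox (-c) c" if "k \<in> K" "0 \<le> t" "t \<le> 1" for k t
  proof -
    have "(k, t) \<in> K \<times> {0..1}" using that by auto
    then have "k - t *\<^sub>R u \<in> L" unfolding L_def by (metis (no_types, lifting) fst_conv image_eqI snd_conv)
    then show ?thesis using c by blast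
  qed
  have KB: "K \<subseteq> cbox (-c) c" using Lmem[of _ 0] by auto
  have zG: "?G x = 0" if "x \<notin> K" for x
    using Dv_vanish[of K F x u] K z that compact_imp_closed by blast
  have cF: "continuous_on UNIV F"
    using dF by (simp add: differentiable_imp_continuous_on differentiable_on_def)
  let ?B = "cbox (-c) c"
  have ftc: "((\<lambda>t. ?G (y + t *\<^sub>R u)) has_integral (F (y + u) - F y)) {0..1}" for y
  proof -
    have "((\<lambda>t. F (y + t *\<^sub>R u)) has_vector_derivative ?G (y + t *\<^sub>R u)) (at t within {0..1})" for t
      unfolding has_vector_derivative_def by (rule line_deriv'[OF dF])
    from fundamental_theorem_of_calculus[OF _ this] show ?thesis by simp
  qed
  have cont2: "continuous_on (cbox (-c, 0) (c, 1)) (\<lambda>(y, t). ?G (y + t *\<^sub>R u))"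
  proof -
    have "continuous_on UNIV (\<lambda>p::'a \<times> real. fst p + snd p *\<^sub>R u)"
      by (intro continuous_intros)
    then have "continuous_on UNIV (?G \<circ> (\<lambda>p::'a \<times> real. fst p + snd p *\<^sub>R u))"
      using continuous_on_compose cG continuous_on_subset by blast
    then show ?thesis by (auto simp: o_def case_prod_beta intro: continuous_on_subset)
  qed
  have swap: "integral ?B (\<lambda>y. integral (cbox 0 1) (\<lambda>t. ?G (y + t *\<^sub>R u))) =
              integral (cbox 0 1) (\<lambda>t. integral ?B (\<lambda>y. ?G (y + t *\<^sub>R u)))"
    by (rule integral_swap_continuous[OF cont2])
  have lhs: "integral ?B (\<lambda>y. integral (cbox 0 1) (\<lambda>t. ?G (y + t *\<^sub>R u))) = 0"
  proof -
    have "integral ?B (\<lambda>y. integral (cbox 0 1) (\<lambda>t. ?G (y + t *\<^sub>R u))) = integral ?B (\<lambda>y. F (y + u) - F y)"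
      using ftc by (intro integral_cong) (simp add: integral_unique)
    also have "\<dots> = integral ?B (\<lambda>y. F (y + u)) - integral ?B F"
    proof (rule integral_diff)
      have "continuous_on UNIV (\<lambda>y. F (y + u))"
        by (rule continuous_on_compose2[OF cF]) (auto intro: continuous_intros)
      then show "(\<lambda>y. F (y + u)) integrable_on ?B" by (auto intro: integrable_continuous continuous_on_subset)
      show "F integrable_on ?B" using cF by (auto intro: integrable_continuous continuous_on_subset)
    qed
    also have "\<dots> = 0"
      using shift_integral[OF cF z KB, of u] Lmem[of _ 1] by simp
    finally show ?thesis .
  qed
  have rhs: "integral (cbox 0 1) (\<lambda>t. integral ?B (\<lambda>y. ?G (y + t *\<^sub>R u))) = integral ?B ?G"
  proof -
    have "integral (cbox 0 1) (\<lambda>t. integral ?B (\<lambda>y. ?G (y + t *\<^sub>R u))) = integral (cbox 0 (1::real)) (\<lambda>t. integral ?B ?G)"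
    proof (rule integral_cong)
      fix t :: real assume "t \<in> cbox 0 1"
      then show "integral ?B (\<lambda>y. ?G (y + t *\<^sub>R u)) = integral ?B ?G"
        using shift_integral[OF cG zG KB, of "t *\<^sub>R u"] Lmem[of _ t] by auto
    qed
    then show ?thesis by simp
  qed
  have "integral ?B ?G = 0" using swap lhs rhs by simp
  moreover have "?G integrable_on ?B" using cG by (auto intro: integrable_continuous continuous_on_subset)
  ultimately have "(?G has_integral 0) ?B" by (metis has_integral_integral)
  then show ?thesis
    by (rule has_integral_on_superset) (use zG KB in auto)
qed

lemma cont_cs_integrable:
  fixes g :: "'a::euclidean_space \<Rightarrow> real"
  assumes "continuous_on UNIV g" "compact K" "\<And>x. x \<notin> K \<Longrightarrow> g x = 0"
  shows "g integrable_on UNIV"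
proof -
  obtain c where c: "K \<subseteq> cbox (-c) c"
    using assms(2) compact_imp_bounded bounded_subset_cbox_symmetric by metis
  have "g integrable_on cbox (-c) c" using assms(1) by (auto intro: integrable_continuous continuous_on_subset)
  then have "(g has_integral integral (cbox (-c) c) g) (cbox (-c) c)" by blast
  then have "(g has_integral integral (cbox (-c) c) g) UNIV"
    by (rule has_integral_on_superset) (use c assms(3) in auto)
  then show ?thesis by blast
qed

lemma ibp:
  fixes f h :: "'a::euclidean_space \<Rightarrow> real"
  assumes f: "smooth_on f UNIV" and h: "smooth_on h UNIV" and K: "compact K"
    and z: "\<And>x. x \<notin> K \<Longrightarrow> f x = 0"
  shows "((\<lambda>x. Dv f u x * h x + f x * Dv h u x) has_integral 0) UNIV"
proof -
  define F where "F x = f x * h x" for x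
  have hd: "(F has_derivative (\<lambda>v. f x * frechet_derivative h (at x) v + frechet_derivative f (at x) v * h x)) (at x)" for x
    unfolding F_def by (intro has_derivative_mult smooth_has_derivative f h)
  then have dF: "F differentiable at x" for x unfolding differentiable_def by blast
  have eq: "Dv F u x = Dv f u x * h x + f x * Dv h u x" for x
    using frechet_derivative_at[OF hd[of x]] unfolding Dv_def by (metis add.commute mult.commute)
  have "continuous_on UNIV (\<lambda>x. Dv f u x * h x + f x * Dv h u x)"
    by (intro continuous_intros smooth_cont smooth_contD f h)
  then have cG: "continuous_on UNIV (Dv F u)" unfolding eq[abs_def] .
  have "(Dv F u has_integral 0) UNIV"
    by (rule Dv_integral_zero[OF dF cG K]) (simp add: F_def z)
  then show ?thesis unfolding eq[abs_def] .
qed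

lemma smooth_supp_integrable:
  fixes f h :: "'a::euclidean_space \<Rightarrow> real"
  assumes "continuous_on UNIV f" "continuous_on UNIV h" "compact K" "\<And>x. x \<notin> K \<Longrightarrow> f x = 0"
  shows "(\<lambda>x. f x * h x) integrable_on UNIV"
  by (rule cont_cs_integrable[OF _ assms(3)]) (use assms in \<open>auto intro: continuous_intros\<close>)

lemma K_real:
  fixes f g :: "'a::euclidean_space \<Rightarrow> real"
  assumes f: "smooth_on f UNIV" and g: "smooth_on g UNIV" and K: "compact K"
    and z: "\<And>x. x \<notin> K \<Longrightarrow> f x = 0"
  shows "((\<lambda>x. Dv f u x * Dv g v x - Dv f v x * Dv g u x) has_integral 0) UNIV"
proof -
  have zf: "Dv f w x = 0" if "x \<notin> K" for w x
    using Dv_vanish[of K f x w] K z that compact_imp_closed by blast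
  have i1: "((\<lambda>x. Dv f u x * Dv g v x + f x * Dv (Dv g v) u x) has_integral 0) UNIV"
    by (rule ibp[OF f smooth_Dv[OF g] K z])
  have i2: "((\<lambda>x. Dv f v x * Dv g u x + f x * Dv (Dv g u) v x) has_integral 0) UNIV"
    by (rule ibp[OF f smooth_Dv[OF g] K z])
  have c: "Dv (Dv g v) u x = Dv (Dv g u) v x" for x using clairaut_real[OF g] by simp
  have "((\<lambda>x. (Dv f u x * Dv g v x + f x * Dv (Dv g v) u x) - (Dv f v x * Dv g u x + f x * Dv (Dv g u) v x)) has_integral 0 - 0) UNIV"
    by (rule has_integral_diff[OF i1 i2])
  then show ?thesis by (simp add: c)
qed

lemma nn_integral_cs:
  fixes h :: "'a::euclidean_space \<Rightarrow> real"
  assumes "\<And>x. 0 \<le> h x" "open \<Omega>" "\<And>x. x \<notin> \<Omega> \<Longrightarrow> h x = 0" "(h has_integral I) UNIV"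
  shows "(\<integral>\<^sup>+ x. ennreal (h x) \<partial>lebesgue_on \<Omega>) = ennreal I"
proof -
  have "\<Omega> \<in> sets lebesgue" using assms(2) by simp
  then have "(\<integral>\<^sup>+ x. ennreal (h x) \<partial>lebesgue_on \<Omega>) = (\<integral>\<^sup>+ x. ennreal (h x) * indicator \<Omega> x \<partial>lebesgue)"
    by (subst nn_integral_restrict_space) auto
  also have "\<dots> = (\<integral>\<^sup>+ x. ennreal (h x) * indicator UNIV x \<partial>lborel)"
    unfolding nn_integral_completion using assms(3)
    by (intro nn_integral_cong) (auto simp: indicator_def)
  also have "\<dots> = ennreal I"
    by (rule nn_integral_has_integral_lebesgue') (use assms in auto)
  finally show ?thesis .
qed

lemma sq_sum_double: "(\<Sum>j\<in>A. u j)\<^sup>2 = (\<Sum>j\<in>A. \<Sum>k\<in>A. u j * u k)" for u :: "_ \<Rightarrow> real"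
  by (simp add: power2_eq_square sum_product)

lemma alg:
  fixes a a' b b' :: "'n::finite \<Rightarrow> 'n \<Rightarrow> real"
  defines "p \<equiv> \<lambda>j k. (a j k - b' j k) / 2" and "q \<equiv> \<lambda>j k. (a' j k + b j k) / 2"
    and "u \<equiv> \<lambda>j. (a j j + b' j j) / 2" and "v \<equiv> \<lambda>j. (a' j j - b j j) / 2"
    and "brk \<equiv> \<lambda>j k. (a j j * a k k - a j k * a k j) + (a j j * b' k k - b j k * a' k j) + (b' j j * a k k - a' j k * b k j)
      + (b' j j * b' k k - b' j k * b' k j) + (a' j j * a' k k - a' j k * a' k j) - (a' j j * b k k - b' j k * a k j)
      - (b j j * a' k k - a j k * b' k j) + (b j j * b k k - b j k * b k j) + 2 * (a' j k * b j k - b' j k * a j k)"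
  shows "(\<Sum>j\<in>UNIV. \<Sum>k\<in>UNIV. (a j k)\<^sup>2 + (b j k)\<^sup>2 + (a' j k)\<^sup>2 + (b' j k)\<^sup>2)
    = 2 * (\<Sum>j\<in>UNIV. \<Sum>k\<in>UNIV. (p k j - p j k)\<^sup>2 + (q k j - q j k)\<^sup>2)
      + 4 * ((\<Sum>j\<in>UNIV. u j)\<^sup>2 + (\<Sum>j\<in>UNIV. v j)\<^sup>2) - (\<Sum>j\<in>UNIV. \<Sum>k\<in>UNIV. brk j k)"
proof -
  define L where "L j k = (a j k)\<^sup>2 + (b j k)\<^sup>2 + (a' j k)\<^sup>2 + (b' j k)\<^sup>2" for j k
  define D where "D j k = (p k j - p j k)\<^sup>2 + (q k j - q j k)\<^sup>2" for j k
  define T where "T j k = u j * u k + v j * v k" for j k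
  define w where "w j k = 2 * ((p j k)\<^sup>2 + (q j k)\<^sup>2)" for j k
  have H: "L j k - 2 * D j k - 4 * T j k + brk j k = w j k - w k j" for j k
    unfolding L_def D_def T_def w_def brk_def p_def q_def u_def v_def
    by (simp add: power2_eq_square field_simps)
  have "(\<Sum>j\<in>UNIV. \<Sum>k\<in>UNIV. L j k - 2 * D j k - 4 * T j k + brk j k) = 
        (\<Sum>j\<in>UNIV. \<Sum>k\<in>UNIV. w j k) - (\<Sum>j\<in>UNIV. \<Sum>k\<in>UNIV. w k j)"
    by (simp add: H sum_subtractf)
  also have "\<dots> = 0" using sum.swap[of w UNIV UNIV] by simp
  finally have 0: "(\<Sum>j\<in>UNIV. \<Sum>k\<in>UNIV. L j k - 2 * D j k - 4 * T j k + brk j k) = 0" .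
  have first: "(\<Sum>j\<in>UNIV. \<Sum>k\<in>UNIV. L j k - 2 * D j k - 4 * T j k + brk j k) =
     (\<Sum>j\<in>UNIV. \<Sum>k\<in>UNIV. L j k) - 2 * (\<Sum>j\<in>UNIV. \<Sum>k\<in>UNIV. D j k) - 4 * (\<Sum>j\<in>UNIV. \<Sum>k\<in>UNIV. T j k)
      + (\<Sum>j\<in>UNIV. \<Sum>k\<in>UNIV. brk j k)"
    by (simp add: sum.distrib sum_subtractf sum_distrib_left)
  have TT: "(\<Sum>j\<in>UNIV. \<Sum>k\<in>UNIV. T j k) = (\<Sum>j\<in>UNIV. u j)\<^sup>2 + (\<Sum>j\<in>UNIV. v j)\<^sup>2"
    unfolding T_def sq_sum_double by (simp add: sum.distrib)
  have e: "(\<Sum>j\<in>UNIV. \<Sum>k\<in>UNIV. L j k) - 2 * (\<Sum>j\<in>UNIV. \<Sum>k\<in>UNIV. D j k) - 4 * (\<Sum>j\<in>UNIV. \<Sum>k\<in>UNIV. T j k)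
      + (\<Sum>j\<in>UNIV. \<Sum>k\<in>UNIV. brk j k) = 0"
    by (rule trans[OF first[symmetric] 0])
  have ab: "x - 2*y - 4*z + w = (0::real) \<Longrightarrow> z = t \<Longrightarrow> x = 2*y + 4*t - w" for x y z w t by simp
  show ?thesis using ab[OF e TT] unfolding L_def D_def .
qed

theorem proposition2p1:
  fixes \<Omega> :: "(complex^'n) set" and \<eta> :: "complex^'n \<Rightarrow> real"
    and \<omega> :: "'n \<Rightarrow> complex^'n \<Rightarrow> complex"
  assumes "open \<Omega>" and "connected \<Omega>"
    and "\<eta> \<in> borel_measurable (lebesgue_on \<Omega>)"
    and "\<forall>z\<in>\<Omega>. 0 \<le> \<eta> z"
    and "\<forall>\<phi> :: complex^'n \<Rightarrow> real. test_function \<Omega> \<phi> \<longrightarrow>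
          (\<integral>\<^sup>+ z. ennreal ((\<phi> z)\<^sup>2 * \<eta> z) \<partial>(lebesgue_on \<Omega>))
            \<le> (\<integral>\<^sup>+ z. ennreal (grad_sq \<phi> z) \<partial>(lebesgue_on \<Omega>))"
    and "\<forall>j. test_function \<Omega> (\<omega> j)"
  shows "(\<integral>\<^sup>+ z. ennreal (form_sq \<omega> z * \<eta> z) \<partial>(lebesgue_on \<Omega>))
    \<le> 4 * (\<integral>\<^sup>+ z. ennreal (dbar_sq \<omega> z) \<partial>(lebesgue_on \<Omega>))
      + 4 * (\<integral>\<^sup>+ z. ennreal ((cmod (dbar_star \<omega> z))\<^sup>2) \<partial>(lebesgue_on \<Omega>))"
proof -
  have tf: "test_function \<Omega> (\<omega> j)" for j using assms(6) by blast
  have sm: "smooth_on (\<omega> j) UNIV" for j using tf unfolding test_function_def by blast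
  define S where "S = (\<Union>j. closure {x. \<omega> j x \<noteq> 0})"
  have cS: "compact S" unfolding S_def using tf by (auto simp: test_function_def)
  have SO: "S \<subseteq> \<Omega>" unfolding S_def using tf by (auto simp: test_function_def)
  have clS: "closed S" using cS compact_imp_closed by blast
  have z\<omega>: "\<omega> j x = 0" if "x \<notin> S" for j x
  proof (rule ccontr)
    assume "\<omega> j x \<noteq> 0"
    then have "x \<in> {y. \<omega> j y \<noteq> 0}" by simp
    then have "x \<in> closure {y. \<omega> j y \<noteq> 0}" by (rule subsetD[OF closure_subset])
    then have "x \<in> S" unfolding S_def by (rule UN_I[OF UNIV_I])
    with that show False by contradiction
  qed
  define Rp where "Rp j = (\<lambda>z. Re (\<omega> j z))" for j
  define Ip where "Ip j = (\<lambda>z. Im (\<omega> j z))" for j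
  have smR: "smooth_on (Rp j) UNIV" for j using smooth_linear[OF bounded_linear_Re sm[of j]] by (simp add: Rp_def)
  have smI: "smooth_on (Ip j) UNIV" for j using smooth_linear[OF bounded_linear_Im sm[of j]] by (simp add: Ip_def)
  have DvC: "Dv (\<omega> j) u z = Complex (Dv (Rp j) u z) (Dv (Ip j) u z)" for j u z
    by (simp add: complex_eq_iff Rp_def Ip_def Dv_linear[OF bounded_linear_Re sm] Dv_linear[OF bounded_linear_Im sm])
  have zR: "Rp j x = 0" if "x \<notin> S" for j x using z\<omega>[OF that] by (simp add: Rp_def)
  have zI: "Ip j x = 0" if "x \<notin> S" for j x using z\<omega>[OF that] by (simp add: Ip_def)
  have zDR: "Dv (Rp j) u x = 0" if "x \<notin> S" for j u x by (rule Dv_vanish[OF clS zR that])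
  have zDI: "Dv (Ip j) u x = 0" if "x \<notin> S" for j u x by (rule Dv_vanish[OF clS zI that])
  define X where "X k = (axis k 1 :: complex^'n)" for k
  define Y where "Y k = (axis k \<i> :: complex^'n)" for k
  define a where "a j k z = Dv (Rp j) (X k) z" for j k z
  define a' where "a' j k z = Dv (Ip j) (X k) z" for j k z
  define b where "b j k z = Dv (Rp j) (Y k) z" for j k z
  define b' where "b' j k z = Dv (Ip j) (Y k) z" for j k z
  have ca: "continuous_on UNIV (a j k)" "continuous_on UNIV (a' j k)"
       "continuous_on UNIV (b j k)" "continuous_on UNIV (b' j k)" for j k
    unfolding a_def a'_def b_def b'_def by (simp_all add: smooth_contD smR smI)
  have za: "a j k x = 0" "a' j k x = 0" "b j k x = 0" "b' j k x = 0" if "x \<notin> S" for j k x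
    unfolding a_def a'_def b_def b'_def using zDR zDI that by auto
  define gR where "gR j z = (\<Sum>k\<in>UNIV. (a j k z)\<^sup>2 + (b j k z)\<^sup>2)" for j z
  define gI where "gI j z = (\<Sum>k\<in>UNIV. (a' j k z)\<^sup>2 + (b' j k z)\<^sup>2)" for j z
  have gRe: "grad_sq (Rp j) = gR j" for j
    by (rule ext) (simp add: grad_sq_def gR_def dx_def dy_def a_def b_def Dv_def X_def Y_def)
  have gIe: "grad_sq (Ip j) = gI j" for j
    by (rule ext) (simp add: grad_sq_def gI_def dx_def dy_def a'_def b'_def Dv_def X_def Y_def)
  have cgR: "continuous_on UNIV (gR j)" "continuous_on UNIV (gI j)" for j
    unfolding gR_def[abs_def] gI_def[abs_def] by (intro continuous_intros ca)+
  have zgR: "gR j x = 0" "gI j x = 0" if "x \<notin> S" for j x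
    unfolding gR_def gI_def using za[OF that] by auto
  have igR: "gR j integrable_on UNIV" "gI j integrable_on UNIV" for j
    using cont_cs_integrable[OF cgR(1) cS zgR(1)] cont_cs_integrable[OF cgR(2) cS zgR(2)] by auto
  define dbE where "dbE z = (1/2) * (\<Sum>j\<in>UNIV. \<Sum>k\<in>UNIV.
     ((a k j z - b' k j z) / 2 - (a j k z - b' j k z) / 2)\<^sup>2 + ((a' k j z + b k j z) / 2 - (a' j k z + b j k z) / 2)\<^sup>2)" for z
  define thE where "thE z = (\<Sum>j\<in>UNIV. (a j j z + b' j j z) / 2)\<^sup>2 + (\<Sum>j\<in>UNIV. (a' j j z - b j j z) / 2)\<^sup>2" for z
  have dzb: "dzbar (\<omega> k) j z = Complex ((a k j z - b' k j z) / 2) ((a' k j z + b k j z) / 2)" for j k z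
    by (simp add: dzbar_def dx_def dy_def Dv_def[symmetric] DvC complex_eq_iff a_def a'_def b_def b'_def X_def Y_def)
  have dzz: "dz (\<omega> j) j z = Complex ((a j j z + b' j j z) / 2) ((a' j j z - b j j z) / 2)" for j z
    by (simp add: dz_def dx_def dy_def Dv_def[symmetric] DvC complex_eq_iff a_def a'_def b_def b'_def X_def Y_def)
  have dbe: "dbar_sq \<omega> = dbE"
    by (rule ext) (simp add: dbar_sq_def dbE_def dzb cmod_power2)
  have the: "(\<lambda>z. (cmod (dbar_star \<omega> z))\<^sup>2) = thE"
    by (rule ext) (simp add: dbar_star_def thE_def dzz cmod_power2 Re_sum Im_sum)
  have cdb: "continuous_on UNIV dbE" "continuous_on UNIV thE"
    unfolding dbE_def[abs_def] thE_def[abs_def] by (auto intro!: continuous_intros ca)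
  have zdb: "dbE x = 0" "thE x = 0" if "x \<notin> S" for x
    unfolding dbE_def thE_def using za[OF that] by auto
  have idb: "dbE integrable_on UNIV" "thE integrable_on UNIV"
    using cont_cs_integrable[OF cdb(1) cS zdb(1)] cont_cs_integrable[OF cdb(2) cS zdb(2)] by auto
  define brk where "brk j k z = (a j j z * a k k z - a j k z * a k j z) + (a j j z * b' k k z - b j k z * a' k j z) + (b' j j z * a k k z - a' j k z * b k j z)
      + (b' j j z * b' k k z - b' j k z * b' k j z) + (a' j j z * a' k k z - a' j k z * a' k j z) - (a' j j z * b k k z - b' j k z * a k j z)
      - (b j j z * a' k k z - a j k z * b' k j z) + (b j j z * b k k z - b j k z * b k j z) + 2 * (a' j k z * b j k z - b' j k z * a j k z)" for j k z
  have KR: "((\<lambda>x. Dv f u x * Dv g v x - Dv f v x * Dv g u x) has_integral 0) UNIV"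
    if "f \<in> range Rp \<union> range Ip" "g \<in> range Rp \<union> range Ip" for f g u v
  proof -
    have "smooth_on f UNIV" "\<And>x. x \<notin> S \<Longrightarrow> f x = 0" using that smR smI zR zI by auto
    moreover have "smooth_on g UNIV" using that smR smI by auto
    ultimately show ?thesis using K_real[of f g S] cS by blast
  qed
  have ibrk: "(brk j k has_integral 0) UNIV" for j k
  proof -
    have "((\<lambda>z. brk j k z) has_integral (0 + 0 + 0 + 0 + 0 - 0 - 0 + 0 + 2 * 0)) UNIV"
      unfolding brk_def a_def a'_def b_def b'_def
      by (intro has_integral_add has_integral_diff has_integral_cmult_real KR) auto
    then show ?thesis by simp
  qed
  have iB: "((\<lambda>z. \<Sum>j\<in>UNIV. \<Sum>k\<in>UNIV. brk j k z) has_integral 0) UNIV"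
  proof -
    have "((\<lambda>z. \<Sum>j\<in>UNIV. \<Sum>k\<in>UNIV. brk j k z) has_integral (\<Sum>j\<in>(UNIV::'n set). \<Sum>k\<in>(UNIV::'n set). 0)) UNIV"
    proof (rule has_integral_sum[OF finite_class.finite_UNIV])
      fix j
      show "((\<lambda>z. \<Sum>k\<in>UNIV. brk j k z) has_integral (\<Sum>k\<in>(UNIV::'n set). 0)) UNIV"
        by (rule has_integral_sum[OF finite_class.finite_UNIV]) (rule ibrk)
    qed
    then show ?thesis by simp
  qed
  have pw: "(\<Sum>j\<in>UNIV. gR j z + gI j z) = 4 * dbE z + 4 * thE z - (\<Sum>j\<in>UNIV. \<Sum>k\<in>UNIV. brk j k z)" for z
  proof -
    have "(\<Sum>j\<in>UNIV. gR j z + gI j z) = (\<Sum>j\<in>UNIV. \<Sum>k\<in>UNIV. (a j k z)\<^sup>2 + (b j k z)\<^sup>2 + (a' j k z)\<^sup>2 + (b' j k z)\<^sup>2)"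
      unfolding gR_def gI_def by (simp add: sum.distrib[symmetric] add_ac)
    also have "\<dots> = 4 * dbE z + 4 * thE z - (\<Sum>j\<in>UNIV. \<Sum>k\<in>UNIV. brk j k z)"
      using alg[where a="\<lambda>j k. a j k z" and a'="\<lambda>j k. a' j k z" and b="\<lambda>j k. b j k z" and b'="\<lambda>j k. b' j k z"]
      unfolding dbE_def thE_def brk_def by simp
    finally show ?thesis .
  qed
  have hG: "((\<lambda>z. \<Sum>j\<in>UNIV. gR j z + gI j z) has_integral (\<Sum>j\<in>UNIV. integral UNIV (gR j) + integral UNIV (gI j))) UNIV"
    by (intro has_integral_sum finite_class.finite_UNIV has_integral_add integrable_integral igR)
  have hR: "((\<lambda>z. 4 * dbE z + 4 * thE z - (\<Sum>j\<in>UNIV. \<Sum>k\<in>UNIV. brk j k z)) has_integral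
       (4 * integral UNIV dbE + 4 * integral UNIV thE - 0)) UNIV"
    by (intro has_integral_diff has_integral_add has_integral_cmult_real integrable_integral idb iB)
  have M: "(\<Sum>j\<in>UNIV. integral UNIV (gR j) + integral UNIV (gI j)) = 4 * integral UNIV dbE + 4 * integral UNIV thE"
    using has_integral_unique[OF hG hR[folded pw]] by simp
  have OL: "\<Omega> \<in> sets lebesgue" using assms(1) by simp
  have spc: "space (lebesgue_on \<Omega>) = \<Omega>" by simp
  have mR: "Rp j \<in> borel_measurable (lebesgue_on \<Omega>)" "Ip j \<in> borel_measurable (lebesgue_on \<Omega>)" for j
    using continuous_imp_measurable_on_sets_lebesgue[OF continuous_on_subset[OF smooth_cont[OF smR[of j]]] OL]
      continuous_imp_measurable_on_sets_lebesgue[OF continuous_on_subset[OF smooth_cont[OF smI[of j]]] OL]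
    by auto
  have m\<eta>: "\<eta> \<in> borel_measurable (lebesgue_on \<Omega>)" by (rule assms(3))
  have mRR: "(\<lambda>z. ennreal ((Rp j z)\<^sup>2 * \<eta> z)) \<in> borel_measurable (lebesgue_on \<Omega>)"
     "(\<lambda>z. ennreal ((Ip j z)\<^sup>2 * \<eta> z)) \<in> borel_measurable (lebesgue_on \<Omega>)" for j
    using mR[of j] m\<eta> by (auto intro!: measurable_compose[OF _ measurable_ennreal] borel_measurable_times borel_measurable_power)
  have lhs: "(\<integral>\<^sup>+ z. ennreal (form_sq \<omega> z * \<eta> z) \<partial>(lebesgue_on \<Omega>)) =
      (\<Sum>j\<in>UNIV. (\<integral>\<^sup>+ z. ennreal ((Rp j z)\<^sup>2 * \<eta> z) \<partial>(lebesgue_on \<Omega>)) + (\<integral>\<^sup>+ z. ennreal ((Ip j z)\<^sup>2 * \<eta> z) \<partial>(lebesgue_on \<Omega>)))"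
  proof -
    have "(\<integral>\<^sup>+ z. ennreal (form_sq \<omega> z * \<eta> z) \<partial>(lebesgue_on \<Omega>)) =
        (\<integral>\<^sup>+ z. (\<Sum>j\<in>UNIV. ennreal ((Rp j z)\<^sup>2 * \<eta> z) + ennreal ((Ip j z)\<^sup>2 * \<eta> z)) \<partial>(lebesgue_on \<Omega>))"
    proof (rule nn_integral_cong)
      fix z assume "z \<in> space (lebesgue_on \<Omega>)"
      then have ez: "0 \<le> \<eta> z" using assms(4) spc by auto
      have "form_sq \<omega> z * \<eta> z = (\<Sum>j\<in>UNIV. (Rp j z)\<^sup>2 * \<eta> z + (Ip j z)\<^sup>2 * \<eta> z)"
        by (simp add: form_sq_def cmod_power2 sum_distrib_right distrib_right Rp_def Ip_def)
      also have "ennreal \<dots> = (\<Sum>j\<in>UNIV. ennreal ((Rp j z)\<^sup>2 * \<eta> z + (Ip j z)\<^sup>2 * \<eta> z))"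
        by (rule sum_ennreal[symmetric]) (simp add: ez)
      also have "\<dots> = (\<Sum>j\<in>UNIV. ennreal ((Rp j z)\<^sup>2 * \<eta> z) + ennreal ((Ip j z)\<^sup>2 * \<eta> z))"
        by (rule sum.cong) (simp_all add: ez ennreal_plus)
      finally show "ennreal (form_sq \<omega> z * \<eta> z) = (\<Sum>j\<in>UNIV. ennreal ((Rp j z)\<^sup>2 * \<eta> z) + ennreal ((Ip j z)\<^sup>2 * \<eta> z))" .
    qed
    also have "\<dots> = (\<Sum>j\<in>UNIV. (\<integral>\<^sup>+ z. ennreal ((Rp j z)\<^sup>2 * \<eta> z) + ennreal ((Ip j z)\<^sup>2 * \<eta> z) \<partial>(lebesgue_on \<Omega>)))"
      by (rule nn_integral_sum) (auto intro: borel_measurable_add mRR)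
    also have "\<dots> = (\<Sum>j\<in>UNIV. (\<integral>\<^sup>+ z. ennreal ((Rp j z)\<^sup>2 * \<eta> z) \<partial>(lebesgue_on \<Omega>)) + (\<integral>\<^sup>+ z. ennreal ((Ip j z)\<^sup>2 * \<eta> z) \<partial>(lebesgue_on \<Omega>)))"
      by (rule sum.cong) (simp_all add: nn_integral_add mRR)
    finally show ?thesis .
  qed
  have tfS: "test_function \<Omega> f" if "smooth_on f UNIV" "\<And>x. x \<notin> S \<Longrightarrow> f x = 0" for f :: "complex^'n \<Rightarrow> real"
  proof -
    have sub: "closure {x. f x \<noteq> 0} \<subseteq> S"
      by (rule closure_minimal) (use that(2) clS in auto)
    have "compact (closure {x. f x \<noteq> 0})"
      unfolding compact_eq_bounded_closed
      using bounded_subset[OF compact_imp_bounded[OF cS] sub] by simp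
    then show ?thesis unfolding test_function_def using that(1) sub SO by auto
  qed
  have nnI: "(\<integral>\<^sup>+ z. ennreal (h z) \<partial>(lebesgue_on \<Omega>)) = ennreal (integral UNIV h)"
    if "h integrable_on UNIV" "\<And>x. 0 \<le> h x" "\<And>x. x \<notin> S \<Longrightarrow> h x = 0" for h
    by (rule nn_integral_cs) (use that assms(1) SO in \<open>auto simp: integrable_integral\<close>)
  have gRnn: "0 \<le> gR j x" "0 \<le> gI j x" for j x unfolding gR_def gI_def by (auto intro: sum_nonneg)
  have step: "(\<integral>\<^sup>+ z. ennreal ((Rp j z)\<^sup>2 * \<eta> z) \<partial>(lebesgue_on \<Omega>)) + (\<integral>\<^sup>+ z. ennreal ((Ip j z)\<^sup>2 * \<eta> z) \<partial>(lebesgue_on \<Omega>))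
      \<le> ennreal (integral UNIV (gR j)) + ennreal (integral UNIV (gI j))" for j
  proof (rule add_mono)
    have "(\<integral>\<^sup>+ z. ennreal ((Rp j z)\<^sup>2 * \<eta> z) \<partial>(lebesgue_on \<Omega>)) \<le> (\<integral>\<^sup>+ z. ennreal (grad_sq (Rp j) z) \<partial>(lebesgue_on \<Omega>))"
      using assms(5) tfS[OF smR zR] by blast
    also have "\<dots> = ennreal (integral UNIV (gR j))"
      unfolding gRe by (rule nnI[OF igR(1) gRnn(1) zgR(1)])
    finally show "(\<integral>\<^sup>+ z. ennreal ((Rp j z)\<^sup>2 * \<eta> z) \<partial>(lebesgue_on \<Omega>)) \<le> ennreal (integral UNIV (gR j))" .
    have "(\<integral>\<^sup>+ z. ennreal ((Ip j z)\<^sup>2 * \<eta> z) \<partial>(lebesgue_on \<Omega>)) \<le> (\<integral>\<^sup>+ z. ennreal (grad_sq (Ip j) z) \<partial>(lebesgue_on \<Omega>))"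
      using assms(5) tfS[OF smI zI] by blast
    also have "\<dots> = ennreal (integral UNIV (gI j))"
      unfolding gIe by (rule nnI[OF igR(2) gRnn(2) zgR(2)])
    finally show "(\<integral>\<^sup>+ z. ennreal ((Ip j z)\<^sup>2 * \<eta> z) \<partial>(lebesgue_on \<Omega>)) \<le> ennreal (integral UNIV (gI j))" .
  qed
  have inn: "0 \<le> integral UNIV (gR j)" "0 \<le> integral UNIV (gI j)" for j
    using integral_nonneg[OF igR(1) gRnn(1)] integral_nonneg[OF igR(2) gRnn(2)] by auto
  have dbnn: "0 \<le> dbE x" "0 \<le> thE x" for x unfolding dbE_def thE_def by (auto intro!: sum_nonneg)
  have idnn: "0 \<le> integral UNIV dbE" "0 \<le> integral UNIV thE"
    using integral_nonneg[OF idb(1) dbnn(1)] integral_nonneg[OF idb(2) dbnn(2)] by auto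
  have "(\<integral>\<^sup>+ z. ennreal (form_sq \<omega> z * \<eta> z) \<partial>(lebesgue_on \<Omega>))
      \<le> (\<Sum>j\<in>UNIV. ennreal (integral UNIV (gR j)) + ennreal (integral UNIV (gI j)))"
    unfolding lhs by (rule sum_mono) (rule step)
  also have "\<dots> = ennreal (\<Sum>j\<in>UNIV. integral UNIV (gR j) + integral UNIV (gI j))"
    using inn by (simp add: sum_ennreal[symmetric] ennreal_plus add_nonneg_nonneg)
  also have "\<dots> = ennreal (4 * integral UNIV dbE + 4 * integral UNIV thE)" by (simp add: M)
  also have "\<dots> = 4 * ennreal (integral UNIV dbE) + 4 * ennreal (integral UNIV thE)"
    using idnn by (simp add: ennreal_plus ennreal_mult)
  also have "\<dots> = 4 * (\<integral>\<^sup>+ z. ennreal (dbar_sq \<omega> z) \<partial>(lebesgue_on \<Omega>))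
      + 4 * (\<integral>\<^sup>+ z. ennreal ((cmod (dbar_star \<omega> z))\<^sup>2) \<partial>(lebesgue_on \<Omega>))"
  proof -
    have "(\<integral>\<^sup>+ z. ennreal (dbar_sq \<omega> z) \<partial>(lebesgue_on \<Omega>)) = ennreal (integral UNIV dbE)"
      unfolding dbe by (rule nnI[OF idb(1) dbnn(1) zdb(1)])
    moreover have "(\<integral>\<^sup>+ z. ennreal ((cmod (dbar_star \<omega> z))\<^sup>2) \<partial>(lebesgue_on \<Omega>)) = ennreal (integral UNIV thE)"
    proof -
      have eqp: "(cmod (dbar_star \<omega> z))\<^sup>2 = thE z" for z using the by metis
      have "(\<integral>\<^sup>+ z. ennreal (thE z) \<partial>(lebesgue_on \<Omega>)) = ennreal (integral UNIV thE)"
        by (rule nnI) (use idb(2) dbnn(2) zdb(2) in auto)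
      then show ?thesis by (simp add: eqp)
    qed
    ultimately show ?thesis by simp
  qed
  finally show ?thesis .
qed

end
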